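(* Let $\Sigma$ be an alphabet and let $A$, $B$, $C$ be modules over $\Sigma$ with pairwise disjoint node sets. Then $(A \bullet B) \bullet C$ and $A \bullet (B \bullet C)$ are both defined and are isomorphic modules, i.e. $(A\bullet B)\bullet C = A\bullet(B\bullet C)$ up to renaming of nodes.
   Context: An alphabet $\Sigma$ is a finite set of labels. An interface over $\Sigma$ is a finite set $R$ in which every element carries a label from $\Sigma$ and a positive integer index, such that for each label $l$, if $R$ contains exactly $k$ elements labeled $l$, these carry the indices $1,\dots,k$. An element has a fixed label, but may carry different indices in different interfaces. A module $G$ over $\Sigma$ is a finite directed graph $(V,E)$ together with two interfaces over $\Sigma$, the left interface ${}^*G\subseteq V$ and the right interface $G^*\subseteq V$ (not necessarily disjoint). Two modules are isomorphic if there is a bijection between their node sets preserving edges, membership in the left and right interfaces, labels, and indices in each interface. Harmonic pairs: for disjoint interfaces $R,S$, elements $r\in R$, $s\in S$ form a harmonic pair $\{r,s\}$ (with label $l$ and index $n$) if both have label $l$, $r$ has index $n$ in $R$ and $s$ has index $n$ in $S$. Composition: let $A,B$ be modules with disjoint node sets. For each node $x$ of $A$ or $B$ put $x'=\{x,y\}$ if $\{x,y\}$ is a harmonic pair of $A^*$ and ${}^*B$, and $x'=x$ otherwise. For a label $l$ let $m_l$ be the number of $l$-labeled harmonic pairs of $A^*$ and ${}^*B$. The module $A\bullet B$ has nodes all $x'$ ($x$ a node of $A$ or $B$) and edges all $(x',z')$ with $(x,z)$ an edge of $A$ or of $B$. Left interface ${}^*(A\bullet B)$: for each $x\in{}^*A$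 with label $l$ and index $n$ in ${}^*A$, $x'$ belongs to it with label $l$ and index $n$; for each $x\in{}^*B$ without harmonic partner in $A^*$, with label $l$ and index $n$ in ${}^*B$, $x$ belongs to it with index $p+n-m_l$, where $p$ is the number of $l$-labeled elements of ${}^*A$. Right interface $(A\bullet B)^*$: for each $x\in B^*$ with label $l$ and index $n$ in $B^*$, $x'$ belongs to it with label $l$ and index $n$; for each $x\in A^*$ without harmonic partner in ${}^*B$, with label $l$ and index $n$ in $A^*$, $x$ belongs to it with index $q+n-m_l$, where $q$ is the number of $l$-labeled elements of $B^*$. *)

theory Defs
  imports Main
begin

text \<open>A module: nodes, directed edges, and two interfaces. An interface is a partial
map sending each of its elements to its (label, index).\<close>

record ('v, 'l) module =
  nodes :: "'v set"
  edges :: "('v \<times> 'v) set"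
  lif   :: "'v \<Rightarrow> ('l \<times> nat) option"
  rif   :: "'v \<Rightarrow> ('l \<times> nat) option"

definition lab_of :: "('v \<Rightarrow> ('l \<times> nat) option) \<Rightarrow> 'v \<Rightarrow> 'l" where
  "lab_of R x = fst (the (R x))"

definition idx_of :: "('v \<Rightarrow> ('l \<times> nat) option) \<Rightarrow> 'v \<Rightarrow> nat" where
  "idx_of R x = snd (the (R x))"

definition with_label :: "('v \<Rightarrow> ('l \<times> nat) option) \<Rightarrow> 'l \<Rightarrow> 'v set" where
  "with_label R l = {x \<in> dom R. lab_of R x = l}"

definition interface :: "'l set \<Rightarrow> ('v \<Rightarrow> ('l \<times> nat) option) \<Rightarrow> bool" where
  "interface \<Sigma> R \<longleftrightarrow> finite (dom R) \<and> (\<forall>x\<in>dom R. lab_of R x \<in> \<Sigma>) \<and>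
     (\<forall>l. inj_on (idx_of R) (with_label R l) \<and>
          idx_of R ` with_label R l = {1..card (with_label R l)})"

definition is_module :: "'l set \<Rightarrow> ('v, 'l) module \<Rightarrow> bool" where
  "is_module \<Sigma> G \<longleftrightarrow> finite \<Sigma> \<and> finite (nodes G) \<and> edges G \<subseteq> nodes G \<times> nodes G \<and>
     dom (lif G) \<subseteq> nodes G \<and> dom (rif G) \<subseteq> nodes G \<and>
     interface \<Sigma> (lif G) \<and> interface \<Sigma> (rif G) \<and>
     (\<forall>x \<in> dom (lif G) \<inter> dom (rif G). lab_of (lif G) x = lab_of (rif G) x)"

definition harmonic :: "('v \<Rightarrow> ('l \<times> nat) option) \<Rightarrow> ('v \<Rightarrow> ('l \<times> nat) option) \<Rightarrow> 'v \<Rightarrow> 'v \<Rightarrow> bool" where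
  "harmonic R S r s \<longleftrightarrow> R r \<noteq> None \<and> R r = S s"

definition hp :: "('v, 'l) module \<Rightarrow> ('v, 'l) module \<Rightarrow> 'v \<Rightarrow> 'v \<Rightarrow> bool" where
  "hp A B x y \<longleftrightarrow> x \<in> nodes A \<and> y \<in> nodes B \<and> harmonic (rif A) (lif B) x y"

text \<open>The node x' of the composite: {x,y} for a harmonic pair {x,y}; otherwise x,
  represented by the singleton {x}.\<close>
definition prime :: "('v, 'l) module \<Rightarrow> ('v, 'l) module \<Rightarrow> 'v \<Rightarrow> 'v set" where
  "prime A B x = {x} \<union> {y. hp A B x y} \<union> {y. hp A B y x}"

definition mcount :: "('v, 'l) module \<Rightarrow> ('v, 'l) module \<Rightarrow> 'l \<Rightarrow> nat" where
  "mcount A B l = card {(x, y). hp A B x y \<and> lab_of (rif A) x = l}"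

definition compose :: "('v, 'l) module \<Rightarrow> ('v, 'l) module \<Rightarrow> ('v set, 'l) module"
  (infixl "\<bullet>" 70) where
  "compose A B = \<lparr>
     nodes = prime A B ` (nodes A \<union> nodes B),
     edges = (\<lambda>(x, z). (prime A B x, prime A B z)) ` (edges A \<union> edges B),
     lif = (\<lambda>s. if \<exists>x. x \<in> dom (lif A) \<and> s = prime A B x
                then lif A (THE x. x \<in> dom (lif A) \<and> s = prime A B x)
                else if \<exists>x. x \<in> dom (lif B) \<and> \<not> (\<exists>y. hp A B y x) \<and> s = prime A B x
                then (let x = THE x. x \<in> dom (lif B) \<and> \<not> (\<exists>y. hp A B y x) \<and> s = prime A B x;
                          l = lab_of (lif B) x
                      in Some (l, card (with_label (lif A) l) + idx_of (lif B) x - mcount A B l))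
                else None),
     rif = (\<lambda>s. if \<exists>x. x \<in> dom (rif B) \<and> s = prime A B x
                then rif B (THE x. x \<in> dom (rif B) \<and> s = prime A B x)
                else if \<exists>x. x \<in> dom (rif A) \<and> \<not> (\<exists>y. hp A B x y) \<and> s = prime A B x
                then (let x = THE x. x \<in> dom (rif A) \<and> \<not> (\<exists>y. hp A B x y) \<and> s = prime A B x;
                          l = lab_of (rif A) x
                      in Some (l, card (with_label (rif B) l) + idx_of (rif A) x - mcount A B l))
                else None) \<rparr>"

definition composable :: "('v, 'l) module \<Rightarrow> ('v, 'l) module \<Rightarrow> bool" where
  "composable A B \<longleftrightarrow> nodes A \<inter> nodes B = {}"

text \<open>Canonical renaming x \<mapsto> {x}, needed to put a module on the node type of composites.\<close>
definition lift :: "('v, 'l) module \<Rightarrow> ('v set, 'l) module" where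
  "lift G = \<lparr> nodes = (\<lambda>x. {x}) ` nodes G,
             edges = (\<lambda>(x, z). ({x}, {z})) ` edges G,
             lif = (\<lambda>s. if is_singleton s then lif G (the_elem s) else None),
             rif = (\<lambda>s. if is_singleton s then rif G (the_elem s) else None) \<rparr>"

definition module_iso :: "('a, 'l) module \<Rightarrow> ('b, 'l) module \<Rightarrow> bool" where
  "module_iso G H \<longleftrightarrow> (\<exists>f. bij_betw f (nodes G) (nodes H) \<and>
     (\<forall>x \<in> nodes G. \<forall>z \<in> nodes G. (x, z) \<in> edges G \<longleftrightarrow> (f x, f z) \<in> edges H) \<and>
     (\<forall>x \<in> nodes G. lif H (f x) = lif G x \<and> rif H (f x) = rif G x) \<and>
     dom (lif H) \<subseteq> nodes H \<and> dom (rif H) \<subseteq> nodes H \<and>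
     dom (lif G) \<subseteq> nodes G \<and> dom (rif G) \<subseteq> nodes G)"

end

theory Submission
  imports Defs
begin

definition cnt :: "('v \<Rightarrow> ('l \<times> nat) option) \<Rightarrow> 'l \<Rightarrow> nat" where
  "cnt R l = card (with_label R l)"

lemma with_label_iff: "x \<in> with_label R l \<longleftrightarrow> (\<exists>n. R x = Some (l,n))"
  by (auto simp: with_label_def lab_of_def)

lemma interface_elim:
  assumes "interface \<Sigma> R" "R x = Some (l,n)"
  shows "l \<in> \<Sigma> \<and> 1 \<le> n \<and> n \<le> cnt R l"
proof -
  have x: "x \<in> with_label R l" using assms(2) by (simp add: with_label_iff)
  have "idx_of R x = n" using assms(2) by (simp add: idx_of_def)
  moreover have "idx_of R x \<in> {1..cnt R l}" using assms(1) x unfolding interface_def cnt_def by blast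
  moreover have "l \<in> \<Sigma>" using assms unfolding interface_def lab_of_def by force
  ultimately show ?thesis by auto
qed

lemma interface_ex:
  assumes "interface \<Sigma> R" "1 \<le> n" "n \<le> cnt R l"
  shows "\<exists>x. R x = Some (l,n)"
proof -
  have "n \<in> idx_of R ` with_label R l" using assms unfolding interface_def cnt_def by auto
  then obtain x where "x \<in> with_label R l" "idx_of R x = n" by auto
  then show ?thesis by (auto simp: with_label_iff idx_of_def)
qed

lemma interface_uniq:
  assumes "interface \<Sigma> R" "R x = Some (l,n)" "R y = Some (l,n)"
  shows "x = y"
proof -
  have "inj_on (idx_of R) (with_label R l)" using assms(1) unfolding interface_def by blast
  moreover have "x \<in> with_label R l" "y \<in> with_label R l" using assms by (auto simp: with_label_iff)
  moreover have "idx_of R x = idx_of R y" using assms by (simp add: idx_of_def)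
  ultimately show ?thesis by (meson inj_onD)
qed

lemma interface_intro:
  assumes fin: "finite (dom R)"
    and rng: "\<And>x l n. R x = Some (l,n) \<Longrightarrow> l \<in> \<Sigma> \<and> 1 \<le> n \<and> n \<le> N l"
    and ex: "\<And>l n. 1 \<le> n \<Longrightarrow> n \<le> N l \<Longrightarrow> \<exists>x. R x = Some (l,n)"
    and un: "\<And>x y l n. R x = Some (l,n) \<Longrightarrow> R y = Some (l,n) \<Longrightarrow> x = y"
  shows "interface \<Sigma> R \<and> (\<forall>l. cnt R l = N l)"
proof -
  have inj: "inj_on (idx_of R) (with_label R l)" for l
    by (rule inj_onI) (auto simp: with_label_iff idx_of_def intro: un)
  have img: "idx_of R ` with_label R l = {1..N l}" for l
  proof
    show "idx_of R ` with_label R l \<subseteq> {1..N l}" using rng by (auto simp: with_label_iff idx_of_def)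
    show "{1..N l} \<subseteq> idx_of R ` with_label R l"
    proof
      fix n assume "n \<in> {1..N l}"
      then obtain x where "R x = Some (l,n)" using ex by auto
      then show "n \<in> idx_of R ` with_label R l" by (force simp: with_label_iff idx_of_def)
    qed
  qed
  have c: "cnt R l = N l" for l
  proof -
    have "card (with_label R l) = card (idx_of R ` with_label R l)" using card_image[OF inj] by simp
    then show ?thesis using img by (simp add: cnt_def)
  qed
  have "\<forall>x\<in>dom R. lab_of R x \<in> \<Sigma>" using rng by (auto simp: lab_of_def)
  then show ?thesis using fin inj img c unfolding interface_def by (simp add: cnt_def)
qed

lemma prime_mem: "x \<in> prime A B x" by (simp add: prime_def)
lemma in_prime: "y \<in> prime A B x \<longleftrightarrow> y = x \<or> hp A B x y \<or> hp A B y x"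
  by (auto simp: prime_def)

locale pair =
  fixes \<Sigma> :: "'l set" and A B :: "('v,'l) module"
  assumes mA: "is_module \<Sigma> A" and mB: "is_module \<Sigma> B" and disj: "nodes A \<inter> nodes B = {}"
begin

lemma iA: "interface \<Sigma> (lif A)" "interface \<Sigma> (rif A)"
  and iB: "interface \<Sigma> (lif B)" "interface \<Sigma> (rif B)"
  using mA mB by (auto simp: is_module_def)

lemma domA: "lif A x = Some p \<Longrightarrow> x \<in> nodes A" "rif A x = Some p \<Longrightarrow> x \<in> nodes A"
  and domB: "lif B x = Some p \<Longrightarrow> x \<in> nodes B" "rif B x = Some p \<Longrightarrow> x \<in> nodes B"
  using mA mB by (auto simp: is_module_def)

lemma hpD: "hp A B x y \<Longrightarrow> x \<in> nodes A \<and> y \<in> nodes B \<and> rif A x = lif B y \<and> rif A x \<noteq> None"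
  unfolding hp_def harmonic_def by (metis (no_types))

lemma hpI: "rif A x = Some p \<Longrightarrow> lif B y = Some p \<Longrightarrow> hp A B x y"
  by (auto simp: hp_def harmonic_def intro: domA domB)

lemma hp_uniq1: "hp A B x y \<Longrightarrow> hp A B x y' \<Longrightarrow> y = y'"
  using hpD interface_uniq[OF iB(1)] by (metis option.exhaust prod.exhaust)

lemma hp_uniq2: "hp A B x y \<Longrightarrow> hp A B x' y \<Longrightarrow> x = x'"
  using hpD interface_uniq[OF iA(2)] by (metis option.exhaust prod.exhaust)

lemma hp_AA: "x \<in> nodes A \<Longrightarrow> \<not> hp A B y x" and hp_BB: "x \<in> nodes B \<Longrightarrow> \<not> hp A B x y"
  using hpD disj by blast+

lemma prime_hp: "hp A B x y \<Longrightarrow> prime A B x = {x,y} \<and> prime A B y = {x,y}"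
  unfolding prime_def using hp_uniq1 hp_uniq2 hpD hp_AA hp_BB by blast

lemma prime_eq: "prime A B x = prime A B y \<longleftrightarrow> x = y \<or> hp A B x y \<or> hp A B y x"
  by (metis in_prime prime_hp prime_mem)

lemma prime_unmA: "x \<in> nodes A \<Longrightarrow> \<not> (\<exists>y. hp A B x y) \<Longrightarrow> prime A B x = {x}"
  unfolding prime_def using hp_AA by blast
lemma prime_unmB: "y \<in> nodes B \<Longrightarrow> \<not> (\<exists>x. hp A B x y) \<Longrightarrow> prime A B y = {y}"
  unfolding prime_def using hp_BB by blast

lemma matchB: "lif B y = Some (l,n) \<Longrightarrow> (\<exists>x. hp A B x y) \<longleftrightarrow> n \<le> cnt (rif A) l"
proof
  assume a: "lif B y = Some (l,n)" "\<exists>x. hp A B x y"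
  then show "n \<le> cnt (rif A) l" using hpD interface_elim[OF iA(2)] by metis
next
  assume a: "lif B y = Some (l,n)" "n \<le> cnt (rif A) l"
  have "1 \<le> n" using interface_elim[OF iB(1) a(1)] by simp
  then obtain x where "rif A x = Some (l,n)" using interface_ex[OF iA(2)] a by blast
  then show "\<exists>x. hp A B x y" using hpI a(1) by blast
qed

lemma matchA: "rif A x = Some (l,n) \<Longrightarrow> (\<exists>y. hp A B x y) \<longleftrightarrow> n \<le> cnt (lif B) l"
proof
  assume a: "rif A x = Some (l,n)" "\<exists>y. hp A B x y"
  then show "n \<le> cnt (lif B) l" using hpD interface_elim[OF iB(1)] by metis
next
  assume a: "rif A x = Some (l,n)" "n \<le> cnt (lif B) l"
  have "1 \<le> n" using interface_elim[OF iA(2) a(1)] by simp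
  then obtain y where "lif B y = Some (l,n)" using interface_ex[OF iB(1)] a by blast
  then show "\<exists>y. hp A B x y" using hpI a(1) by blast
qed

lemma mcount_eq: "mcount A B l = min (cnt (rif A) l) (cnt (lif B) l)"
proof -
  let ?S = "{(x, y). hp A B x y \<and> lab_of (rif A) x = l}"
  let ?f = "\<lambda>(x,y). idx_of (rif A) x"
  have S: "(x,y) \<in> ?S \<longleftrightarrow> (\<exists>n. rif A x = Some (l,n) \<and> lif B y = Some (l,n))" for x y
  proof
    assume "(x,y) \<in> ?S"
    then have "hp A B x y" "lab_of (rif A) x = l" by auto
    then show "\<exists>n. rif A x = Some (l,n) \<and> lif B y = Some (l,n)"
    proof -
      obtain l' n where r: "rif A x = Some (l',n)" using hpD[OF \<open>hp A B x y\<close>] by (metis option.exhaust prod.exhaust)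
      then have "l' = l" using \<open>lab_of (rif A) x = l\<close> by (simp add: lab_of_def)
      then show ?thesis using r hpD[OF \<open>hp A B x y\<close>] by auto
    qed
  next
    assume "\<exists>n. rif A x = Some (l,n) \<and> lif B y = Some (l,n)"
    then show "(x,y) \<in> ?S" using hpI by (auto simp: lab_of_def)
  qed
  have inj: "inj_on ?f ?S"
  proof (rule inj_onI)
    fix p q assume pq: "p \<in> ?S" "q \<in> ?S" "?f p = ?f q"
    obtain x y x' y' where xy: "p = (x,y)" "q = (x',y')" by (cases p, cases q)
    have "(x,y) \<in> ?S" "(x',y') \<in> ?S" using pq(1,2) xy by simp_all
    then obtain n n' where n: "rif A x = Some (l,n)" "lif B y = Some (l,n)"
      and n': "rif A x' = Some (l,n')" "lif B y' = Some (l,n')" using S[of x y] S[of x' y'] by blast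
    note p = xy n n'
    with \<open>?f p = ?f q\<close> have "n = n'" by (simp add: idx_of_def)
    then show "p = q" using p interface_uniq[OF iA(2)] interface_uniq[OF iB(1)] by metis
  qed
  have img: "?f ` ?S = {1..min (cnt (rif A) l) (cnt (lif B) l)}"
  proof
    show "?f ` ?S \<subseteq> {1..min (cnt (rif A) l) (cnt (lif B) l)}"
    proof
      fix k assume "k \<in> ?f ` ?S"
      then obtain x y where xy: "(x,y) \<in> ?S" "k = idx_of (rif A) x" by auto
      then obtain n where "rif A x = Some (l,n)" "lif B y = Some (l,n)" using S[of x y] by blast
      moreover have "k = n" using xy calculation by (simp add: idx_of_def)
      ultimately have "rif A x = Some (l,n)" "lif B y = Some (l,n)" "k = n" by auto
      then show "k \<in> {1..min (cnt (rif A) l) (cnt (lif B) l)}"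
        using interface_elim[OF iA(2)] interface_elim[OF iB(1)] by fastforce
    qed
    show "{1..min (cnt (rif A) l) (cnt (lif B) l)} \<subseteq> ?f ` ?S"
    proof
      fix k assume k: "k \<in> {1..min (cnt (rif A) l) (cnt (lif B) l)}"
      then obtain x where x: "rif A x = Some (l,k)" using interface_ex[OF iA(2)] by auto
      obtain y where y: "lif B y = Some (l,k)" using interface_ex[OF iB(1)] k by auto
      have "(x,y) \<in> ?S" using S[of x y] x y by blast
      then show "k \<in> ?f ` ?S" using x by (force simp: idx_of_def)
    qed
  qed
  show ?thesis unfolding mcount_def using card_image[OF inj] img by simp
qed

end

context pair
begin

lemma lif_compose: "lif (A \<bullet> B) s = (if \<exists>x. x \<in> dom (lif A) \<and> s = prime A B x
                then lif A (THE x. x \<in> dom (lif A) \<and> s = prime A B x)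
                else if \<exists>x. x \<in> dom (lif B) \<and> \<not> (\<exists>y. hp A B y x) \<and> s = prime A B x
                then (let x = THE x. x \<in> dom (lif B) \<and> \<not> (\<exists>y. hp A B y x) \<and> s = prime A B x;
                          l = lab_of (lif B) x
                      in Some (l, card (with_label (lif A) l) + idx_of (lif B) x - mcount A B l))
                else None)"
  by (simp add: compose_def)

lemma nodes_compose: "nodes (A \<bullet> B) = prime A B ` (nodes A \<union> nodes B)"
  by (simp add: compose_def)

lemma dA: "x \<in> dom (lif A) \<Longrightarrow> x \<in> nodes A" "x \<in> dom (rif A) \<Longrightarrow> x \<in> nodes A"
  and dB: "x \<in> dom (lif B) \<Longrightarrow> x \<in> nodes B" "x \<in> dom (rif B) \<Longrightarrow> x \<in> nodes B"
  using domA domB by auto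

lemma lif_compose_None:
  assumes "\<not> (\<exists>x. x \<in> dom (lif A) \<and> s = prime A B x)"
    "\<not> (\<exists>x. x \<in> dom (lif B) \<and> \<not> (\<exists>y. hp A B y x) \<and> s = prime A B x)"
  shows "lif (A \<bullet> B) s = None"
  by (simp only: lif_compose if_not_P[OF assms(1)] if_not_P[OF assms(2)])

lemma uniqA: "x \<in> nodes A \<Longrightarrow> x' \<in> nodes A \<Longrightarrow> prime A B x = prime A B x' \<Longrightarrow> x' = x"
  using prime_eq hp_AA by blast

lemma unmatched: "lif B y = Some (l,n) \<Longrightarrow> \<not> (\<exists>x. hp A B x y) \<Longrightarrow>
    cnt (rif A) l < n \<and> mcount A B l < n \<and> n \<le> cnt (lif B) l \<and> 1 \<le> n"
  using matchB[of y l n] interface_elim[OF iB(1), of y l n] mcount_eq[of l] by auto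

lemma lif_comp_A: assumes "x \<in> dom (lif A)" shows "lif (A \<bullet> B) (prime A B x) = lif A x"
proof -
  have xA: "x \<in> nodes A" using assms dA by auto
  have "(THE x'. x' \<in> dom (lif A) \<and> prime A B x = prime A B x') = x"
  proof (rule the_equality)
    show "x \<in> dom (lif A) \<and> prime A B x = prime A B x" using assms by auto
  next
    fix x' assume "x' \<in> dom (lif A) \<and> prime A B x = prime A B x'"
    then show "x' = x" using uniqA[OF xA dA(1)] by blast
  qed
  moreover have e: "\<exists>x'. x' \<in> dom (lif A) \<and> prime A B x = prime A B x'" using assms by auto
  ultimately show ?thesis by (simp only: lif_compose if_P[OF e] if_True)
qed

lemma lif_comp_B: assumes y: "lif B y = Some (l,n)" and u: "\<not> (\<exists>x. hp A B x y)"
  shows "lif (A \<bullet> B) (prime A B y) = Some (l, cnt (lif A) l + n - mcount A B l)"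
proof -
  have yB: "y \<in> nodes B" using y domB by blast
  have c1: "\<not> (\<exists>x. x \<in> dom (lif A) \<and> prime A B y = prime A B x)"
  proof
    assume "\<exists>x. x \<in> dom (lif A) \<and> prime A B y = prime A B x"
    then obtain x where x: "x \<in> dom (lif A)" "prime A B y = prime A B x" by blast
    then have "y = x \<or> hp A B y x \<or> hp A B x y" using prime_eq by blast
    then show False using dA(1)[OF x(1)] yB u disj hp_BB by blast
  qed
  have t: "(THE x. x \<in> dom (lif B) \<and> \<not> (\<exists>z. hp A B z x) \<and> prime A B y = prime A B x) = y"
  proof (rule the_equality)
    show "y \<in> dom (lif B) \<and> \<not> (\<exists>z. hp A B z y) \<and> prime A B y = prime A B y" using y u by auto
  next
    fix x assume x: "x \<in> dom (lif B) \<and> \<not> (\<exists>z. hp A B z x) \<and> prime A B y = prime A B x"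
    then have "y = x \<or> hp A B y x \<or> hp A B x y" using prime_eq by blast
    then show "x = y" using x hp_BB[OF yB] hpD dB(1) disj by blast
  qed
  have e: "\<exists>x. x \<in> dom (lif B) \<and> \<not> (\<exists>z. hp A B z x) \<and> prime A B y = prime A B x"
    using y u by auto
  have "lif (A \<bullet> B) (prime A B y) = (let x = y; l = lab_of (lif B) x
                      in Some (l, card (with_label (lif A) l) + idx_of (lif B) x - mcount A B l))"
    by (simp only: lif_compose if_not_P[OF c1] if_P[OF e] t)
  then show ?thesis using y by (simp add: Let_def lab_of_def idx_of_def cnt_def)
qed

lemma lif_comp_A_None: assumes "x \<in> nodes A" "lif A x = None"
  shows "lif (A \<bullet> B) (prime A B x) = None"
proof -
  have c1: "\<not> (\<exists>x'. x' \<in> dom (lif A) \<and> prime A B x = prime A B x')"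
  proof
    assume "\<exists>x'. x' \<in> dom (lif A) \<and> prime A B x = prime A B x'"
    then obtain x' where "x' \<in> dom (lif A)" "prime A B x = prime A B x'" by blast
    then have "x' = x" using uniqA[OF assms(1) dA(1)] by blast
    then show False using assms \<open>x' \<in> dom (lif A)\<close> by auto
  qed
  have c2: "\<not> (\<exists>y. y \<in> dom (lif B) \<and> \<not> (\<exists>z. hp A B z y) \<and> prime A B x = prime A B y)"
  proof
    assume "\<exists>y. y \<in> dom (lif B) \<and> \<not> (\<exists>z. hp A B z y) \<and> prime A B x = prime A B y"
    then obtain y where y: "y \<in> dom (lif B)" "\<not> (\<exists>z. hp A B z y)" "prime A B x = prime A B y" by blast
    then have "x = y \<or> hp A B x y \<or> hp A B y x" using prime_eq by blast
    then show False using y dB(1)[OF y(1)] assms(1) disj hp_BB by blast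
  qed
  show ?thesis using c1 c2 by (intro lif_compose_None) auto
qed

lemma lif_comp_B_None: assumes "y \<in> nodes B" "lif B y = None"
  shows "lif (A \<bullet> B) (prime A B y) = None"
proof -
  have c1: "\<not> (\<exists>x'. x' \<in> dom (lif A) \<and> prime A B y = prime A B x')"
  proof
    assume "\<exists>x'. x' \<in> dom (lif A) \<and> prime A B y = prime A B x'"
    then obtain x' where x': "x' \<in> dom (lif A)" "prime A B y = prime A B x'" by blast
    then have "y = x' \<or> hp A B y x' \<or> hp A B x' y" using prime_eq by blast
    moreover have "\<not> hp A B x' y" using hpD assms(2) by force
    ultimately show False using dA(1)[OF x'(1)] assms(1) disj hp_BB by blast
  qed
  have c2: "\<not> (\<exists>y'. y' \<in> dom (lif B) \<and> \<not> (\<exists>z. hp A B z y') \<and> prime A B y = prime A B y')"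
  proof
    assume "\<exists>y'. y' \<in> dom (lif B) \<and> \<not> (\<exists>z. hp A B z y') \<and> prime A B y = prime A B y'"
    then obtain y' where y': "y' \<in> dom (lif B)" "prime A B y = prime A B y'" by blast
    then have "y = y' \<or> hp A B y y' \<or> hp A B y' y" using prime_eq by blast
    then show False using y' dB(1)[OF y'(1)] assms hp_BB by blast
  qed
  show ?thesis using c1 c2 by (intro lif_compose_None) auto
qed

lemma lif_comp_cases: assumes "lif (A \<bullet> B) s = Some (l,k)"
  shows "(\<exists>x. lif A x = Some (l,k) \<and> s = prime A B x) \<or>
         (\<exists>y n. lif B y = Some (l,n) \<and> \<not> (\<exists>x. hp A B x y) \<and> s = prime A B y \<and>
                k = cnt (lif A) l + n - mcount A B l)"
proof (cases "\<exists>x. x \<in> dom (lif A) \<and> s = prime A B x")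
  case True
  then obtain x where "x \<in> dom (lif A)" "s = prime A B x" by blast
  then show ?thesis using lif_comp_A assms by auto
next
  case F1: False
  show ?thesis
  proof (cases "\<exists>x. x \<in> dom (lif B) \<and> \<not> (\<exists>y. hp A B y x) \<and> s = prime A B x")
    case True
    then obtain y p where y: "lif B y = Some p" "\<not> (\<exists>x. hp A B x y)" "s = prime A B y" by blast
    obtain l' n where "p = (l',n)" by (cases p)
    then show ?thesis using lif_comp_B[of y l' n] y assms by auto
  next
    case False
    then have "lif (A \<bullet> B) s = None" using F1 by (intro lif_compose_None) auto
    then show ?thesis using assms by simp
  qed
qed

lemma lif_comp_interface:
  "interface \<Sigma> (lif (A \<bullet> B)) \<and> (\<forall>l. cnt (lif (A \<bullet> B)) l = cnt (lif A) l + cnt (lif B) l - mcount A B l)"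
proof (rule interface_intro)
  show "finite (dom (lif (A \<bullet> B)))"
  proof (rule finite_subset)
    show "dom (lif (A \<bullet> B)) \<subseteq> prime A B ` (nodes A \<union> nodes B)"
    proof
      fix s assume "s \<in> dom (lif (A \<bullet> B))"
      then obtain l k where "lif (A \<bullet> B) s = Some (l,k)" by auto
      then show "s \<in> prime A B ` (nodes A \<union> nodes B)"
      proof -
        from lif_comp_cases[OF \<open>lif (A \<bullet> B) s = Some (l,k)\<close>]
        obtain x where "s = prime A B x" "x \<in> nodes A \<union> nodes B"
          using domA domB by blast
        then show ?thesis by blast
      qed
    qed
    show "finite (prime A B ` (nodes A \<union> nodes B))" using mA mB by (simp add: is_module_def)
  qed
next
  fix s l k assume a: "lif (A \<bullet> B) s = Some (l,k)"
  show "l \<in> \<Sigma> \<and> 1 \<le> k \<and> k \<le> cnt (lif A) l + cnt (lif B) l - mcount A B l"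
    using lif_comp_cases[OF a]
  proof
    assume "\<exists>x. lif A x = Some (l,k) \<and> s = prime A B x"
    then show ?thesis using interface_elim[OF iA(1)] mcount_eq[of l] by fastforce
  next
    assume "\<exists>y n. lif B y = Some (l,n) \<and> \<not> (\<exists>x. hp A B x y) \<and> s = prime A B y \<and>
                k = cnt (lif A) l + n - mcount A B l"
    then obtain y n where y: "lif B y = Some (l,n)" "\<not> (\<exists>x. hp A B x y)" "k = cnt (lif A) l + n - mcount A B l"
      by blast
    then show ?thesis using unmatched[OF y(1,2)] interface_elim[OF iB(1) y(1)] by auto
  qed
next
  fix l k assume k: "1 \<le> k" "k \<le> cnt (lif A) l + cnt (lif B) l - mcount A B l"
  show "\<exists>s. lif (A \<bullet> B) s = Some (l,k)"
  proof (cases "k \<le> cnt (lif A) l")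
    case True
    then obtain x where "lif A x = Some (l,k)" using interface_ex[OF iA(1)] k by blast
    then show ?thesis using lif_comp_A by (metis domI)
  next
    case False
    define n where "n = k - cnt (lif A) l + mcount A B l"
    have m: "mcount A B l = min (cnt (rif A) l) (cnt (lif B) l)" by (rule mcount_eq)
    have n1: "1 \<le> n" "n \<le> cnt (lif B) l" using False k m by (auto simp: n_def)
    have n2: "cnt (rif A) l < n" using False k m by (auto simp: n_def)
    obtain y where y: "lif B y = Some (l,n)" using interface_ex[OF iB(1) n1] by blast
    have u: "\<not> (\<exists>x. hp A B x y)" using matchB[OF y] n2 by simp
    have "cnt (lif A) l + n - mcount A B l = k" using False m by (auto simp: n_def)
    then show ?thesis using lif_comp_B[OF y u] by metis
  qed
next
  fix s t l k assume a: "lif (A \<bullet> B) s = Some (l,k)" "lif (A \<bullet> B) t = Some (l,k)"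
  note cs = lif_comp_cases[OF a(1)] and ct = lif_comp_cases[OF a(2)]
  have bnd: "k > cnt (lif A) l" if "lif B y = Some (l,n)" "\<not> (\<exists>x. hp A B x y)"
    "k = cnt (lif A) l + n - mcount A B l" for y n
    using unmatched[OF that(1,2)] that(3) by auto
  show "s = t"
    using cs ct
  proof (elim disjE exE conjE)
    fix x x' assume "lif A x = Some (l,k)" "s = prime A B x" "lif A x' = Some (l,k)" "t = prime A B x'"
    then show ?thesis using interface_uniq[OF iA(1)] by metis
  next
    fix x y n assume h: "lif A x = Some (l,k)" "lif B y = Some (l,n)" "\<not> (\<exists>x. hp A B x y)"
      "k = cnt (lif A) l + n - mcount A B l"
    show ?thesis using bnd[OF h(2,3,4)] interface_elim[OF iA(1) h(1)] by linarith
  next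
    fix x y n assume h: "lif A x = Some (l,k)" "lif B y = Some (l,n)" "\<not> (\<exists>x. hp A B x y)"
      "k = cnt (lif A) l + n - mcount A B l"
    show ?thesis using bnd[OF h(2,3,4)] interface_elim[OF iA(1) h(1)] by linarith
  next
    fix y n y' n' assume y: "lif B y = Some (l,n)" "\<not> (\<exists>x. hp A B x y)" "s = prime A B y"
      "k = cnt (lif A) l + n - mcount A B l"
      and y': "lif B y' = Some (l,n')" "\<not> (\<exists>x. hp A B x y')" "t = prime A B y'"
      "k = cnt (lif A) l + n' - mcount A B l"
    have "n = n'" using unmatched[OF y(1,2)] unmatched[OF y'(1,2)] y(4) y'(4) by auto
    then show ?thesis using y y' interface_uniq[OF iB(1)] by metis
  qed
qed

end

definition dual :: "('v,'l) module \<Rightarrow> ('v,'l) module" where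
  "dual G = \<lparr>nodes = nodes G, edges = edges G, lif = rif G, rif = lif G\<rparr>"

lemma dual_sel[simp]: "nodes (dual G) = nodes G" "edges (dual G) = edges G"
  "lif (dual G) = rif G" "rif (dual G) = lif G"
  by (simp_all add: dual_def)

lemma dual_dual[simp]: "dual (dual G) = G" by (simp add: dual_def)

lemma hp_dual: "hp (dual B) (dual A) x y = hp A B y x"
  unfolding hp_def harmonic_def dual_sel by argo

lemma prime_dual: "prime (dual B) (dual A) = prime A B"
  by (rule ext) (auto simp: prime_def hp_dual)

lemma mcount_dual: "mcount (dual B) (dual A) = mcount A B"
proof (rule ext)
  fix l
  have "{(x, y). hp (dual B) (dual A) x y \<and> lab_of (rif (dual B)) x = l}
      = prod.swap ` {(x, y). hp A B x y \<and> lab_of (rif A) x = l}"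
  proof (rule set_eqI)
    fix p
    show "p \<in> {(x, y). hp (dual B) (dual A) x y \<and> lab_of (rif (dual B)) x = l} \<longleftrightarrow>
      p \<in> prod.swap ` {(x, y). hp A B x y \<and> lab_of (rif A) x = l}"
    proof (cases p)
      case (Pair x y)
      have "hp A B y x \<Longrightarrow> lab_of (lif B) x = lab_of (rif A) y"
        by (simp add: hp_def harmonic_def lab_of_def)
      then show ?thesis by (auto simp: Pair hp_dual image_iff)
    qed
  qed
  then show "mcount (dual B) (dual A) l = mcount A B l"
    unfolding mcount_def by (simp add: card_image)
qed

lemma dual_comp: "dual (A \<bullet> B) = dual B \<bullet> dual A"
  unfolding dual_def[of "A \<bullet> B"] compose_def
  by (simp add: prime_dual mcount_dual hp_dual Un_commute cong: if_cong)

lemma ball_sym: "(\<forall>x \<in> X \<inter> Y. f x = g x) = (\<forall>x \<in> Y \<inter> X. g x = f x)"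
  by auto

lemma is_module_dual: "is_module \<Sigma> (dual G) = is_module \<Sigma> G"
  unfolding is_module_def dual_sel ball_sym[of "dom (rif G)"] by auto

lemma pair_dual: "pair \<Sigma> A B \<Longrightarrow> pair \<Sigma> (dual B) (dual A)"
  by (auto simp: pair_def is_module_dual)

lemma lift_sel: "nodes (lift G) = (\<lambda>x. {x}) ` nodes G"
  "edges (lift G) = (\<lambda>(x, z). ({x}, {z})) ` edges G"
  "lif (lift G) {x} = lif G x" "rif (lift G) {x} = rif G x"
  by (simp_all add: lift_def is_singleton_def)

lemma lift_lif_Some: "lif (lift G) s = Some p \<Longrightarrow> \<exists>x. s = {x} \<and> lif G x = Some p"
  by (auto simp: lift_def is_singleton_def split: if_splits)

lemma lift_rif_Some: "rif (lift G) s = Some p \<Longrightarrow> \<exists>x. s = {x} \<and> rif G x = Some p"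
  by (auto simp: lift_def is_singleton_def split: if_splits)

lemma dual_lift: "dual (lift G) = lift (dual G)"
  unfolding dual_def[of "lift G"] lift_def by (simp cong: if_cong)

lemma interface_lift:
  assumes "interface \<Sigma> R" "\<And>s. R' s = (if is_singleton s then R (the_elem s) else None)"
  shows "interface \<Sigma> R' \<and> (\<forall>l. cnt R' l = cnt R l)"
proof -
  have R'1: "R' {x} = R x" for x using assms(2) by (simp add: is_singleton_def)
  have R'2: "R' s = Some p \<Longrightarrow> \<exists>x. s = {x} \<and> R x = Some p" for s p
    using assms(2)[of s] by (auto simp: is_singleton_def split: if_splits)
  show ?thesis
  proof (rule interface_intro)
    have "dom R' \<subseteq> (\<lambda>x. {x}) ` dom R" using R'2 by blast
    moreover have "finite (dom R)" using assms(1) by (simp add: interface_def)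
    ultimately show "finite (dom R')" by (meson finite_imageI finite_subset)
  next
    fix s l n assume "R' s = Some (l,n)"
    then show "l \<in> \<Sigma> \<and> 1 \<le> n \<and> n \<le> cnt R l" using R'2 interface_elim[OF assms(1)] by blast
  next
    fix l n assume "1 \<le> n" "n \<le> cnt R l"
    then obtain x where "R x = Some (l,n)" using interface_ex[OF assms(1)] by blast
    then show "\<exists>s. R' s = Some (l,n)" using R'1 by metis
  next
    fix s t l n assume st: "R' s = Some (l,n)" "R' t = Some (l,n)"
    obtain x where x: "s = {x}" "R x = Some (l,n)" using R'2[OF st(1)] by blast
    obtain y where y: "t = {y}" "R y = Some (l,n)" using R'2[OF st(2)] by blast
    have "x = y" using interface_uniq[OF assms(1) x(2) y(2)] .
    then show "s = t" using x y by simp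
  qed
qed

lemma is_module_lift:
  assumes "is_module \<Sigma> G"
  shows "is_module \<Sigma> (lift G) \<and> (\<forall>l. cnt (lif (lift G)) l = cnt (lif G) l)
     \<and> (\<forall>l. cnt (rif (lift G)) l = cnt (rif G) l)"
proof -
  have il: "interface \<Sigma> (lif (lift G)) \<and> (\<forall>l. cnt (lif (lift G)) l = cnt (lif G) l)"
    by (rule interface_lift) (use assms in \<open>auto simp: is_module_def lift_def\<close>)
  have ir: "interface \<Sigma> (rif (lift G)) \<and> (\<forall>l. cnt (rif (lift G)) l = cnt (rif G) l)"
    by (rule interface_lift) (use assms in \<open>auto simp: is_module_def lift_def\<close>)
  have "dom (lif (lift G)) \<subseteq> nodes (lift G)"
  proof
    fix s assume "s \<in> dom (lif (lift G))"
    then obtain p where "lif (lift G) s = Some p" by auto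
    then obtain x where "s = {x}" "lif G x = Some p" using lift_lif_Some by blast
    moreover have "dom (lif G) \<subseteq> nodes G" using assms by (simp add: is_module_def)
    ultimately show "s \<in> nodes (lift G)" by (auto simp: lift_sel)
  qed
  moreover have "dom (rif (lift G)) \<subseteq> nodes (lift G)"
  proof
    fix s assume "s \<in> dom (rif (lift G))"
    then obtain p where "rif (lift G) s = Some p" by auto
    then obtain x where "s = {x}" "rif G x = Some p" using lift_rif_Some by blast
    moreover have "dom (rif G) \<subseteq> nodes G" using assms by (simp add: is_module_def)
    ultimately show "s \<in> nodes (lift G)" by (auto simp: lift_sel)
  qed
  moreover have "edges (lift G) \<subseteq> nodes (lift G) \<times> nodes (lift G)" using assms
    by (auto simp: is_module_def lift_sel)
  moreover have "\<forall>x \<in> dom (lif (lift G)) \<inter> dom (rif (lift G)). lab_of (lif (lift G)) x = lab_of (rif (lift G)) x"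
  proof
    fix s assume "s \<in> dom (lif (lift G)) \<inter> dom (rif (lift G))"
    then obtain x p where x: "s = {x}" "lif G x = Some p" "rif (lift G) s \<noteq> None" using lift_lif_Some by blast
    then have "x \<in> dom (lif G) \<inter> dom (rif G)" by (auto simp: lift_sel)
    moreover have "\<forall>x \<in> dom (lif G) \<inter> dom (rif G). lab_of (lif G) x = lab_of (rif G) x"
      using assms unfolding is_module_def by blast
    ultimately have "lab_of (lif G) x = lab_of (rif G) x" by blast
    then show "lab_of (lif (lift G)) s = lab_of (rif (lift G)) s"
      using x by (simp add: lift_sel lab_of_def)
  qed
  ultimately show ?thesis using il ir assms by (simp add: is_module_def lift_sel)
qed

context pair
begin

lemma rif_compose_dual: "rif (A \<bullet> B) = lif (dual B \<bullet> dual A)"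
  by (metis dual_comp dual_sel(3))

lemma uniqB: "x \<in> nodes B \<Longrightarrow> x' \<in> nodes B \<Longrightarrow> prime A B x = prime A B x' \<Longrightarrow> x' = x"
  using prime_eq hp_BB by blast

lemma consA: "lif A x = Some (l,k) \<Longrightarrow> rif A x = Some (l',k') \<Longrightarrow> l = l'"
proof -
  assume a: "lif A x = Some (l,k)" "rif A x = Some (l',k')"
  have "\<forall>x \<in> dom (lif A) \<inter> dom (rif A). lab_of (lif A) x = lab_of (rif A) x"
    using mA unfolding is_module_def by blast
  then have "lab_of (lif A) x = lab_of (rif A) x" using a by blast
  then show "l = l'" using a by (simp add: lab_of_def)
qed
lemma consB: "lif B x = Some (l,k) \<Longrightarrow> rif B x = Some (l',k') \<Longrightarrow> l = l'"
proof -
  assume a: "lif B x = Some (l,k)" "rif B x = Some (l',k')"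
  have "\<forall>x \<in> dom (lif B) \<inter> dom (rif B). lab_of (lif B) x = lab_of (rif B) x"
    using mB unfolding is_module_def by blast
  then have "lab_of (lif B) x = lab_of (rif B) x" using a by blast
  then show "l = l'" using a by (simp add: lab_of_def)
qed

lemma rif_comp_B: "x \<in> dom (rif B) \<Longrightarrow> rif (A \<bullet> B) (prime A B x) = rif B x"
proof -
  assume a: "x \<in> dom (rif B)"
  interpret D: pair \<Sigma> "dual B" "dual A" by (rule pair_dual[OF pair_axioms])
  show ?thesis using D.lif_comp_A[of x] a by (simp add: rif_compose_dual prime_dual)
qed

lemma rif_comp_A: "rif A x = Some (l,n) \<Longrightarrow> \<not> (\<exists>y. hp A B x y) \<Longrightarrow>
   rif (A \<bullet> B) (prime A B x) = Some (l, cnt (rif B) l + n - mcount A B l)"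
proof -
  assume a: "rif A x = Some (l,n)" "\<not> (\<exists>y. hp A B x y)"
  interpret D: pair \<Sigma> "dual B" "dual A" by (rule pair_dual[OF pair_axioms])
  show ?thesis using D.lif_comp_B[of x l n] a by (simp add: rif_compose_dual prime_dual hp_dual mcount_dual)
qed

lemma rif_comp_A_None: "x \<in> nodes A \<Longrightarrow> rif A x = None \<Longrightarrow> rif (A \<bullet> B) (prime A B x) = None"
proof -
  assume a: "x \<in> nodes A" "rif A x = None"
  interpret D: pair \<Sigma> "dual B" "dual A" by (rule pair_dual[OF pair_axioms])
  show ?thesis using D.lif_comp_B_None[of x] a by (simp add: rif_compose_dual prime_dual)
qed

lemma rif_comp_B_None: "x \<in> nodes B \<Longrightarrow> rif B x = None \<Longrightarrow> rif (A \<bullet> B) (prime A B x) = None"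
proof -
  assume a: "x \<in> nodes B" "rif B x = None"
  interpret D: pair \<Sigma> "dual B" "dual A" by (rule pair_dual[OF pair_axioms])
  show ?thesis using D.lif_comp_A_None[of x] a by (simp add: rif_compose_dual prime_dual)
qed

lemma rif_comp_cases: assumes "rif (A \<bullet> B) s = Some (l,k)"
  shows "(\<exists>x. rif B x = Some (l,k) \<and> s = prime A B x) \<or>
         (\<exists>x n. rif A x = Some (l,n) \<and> \<not> (\<exists>y. hp A B x y) \<and> s = prime A B x \<and>
                k = cnt (rif B) l + n - mcount A B l)"
proof -
  interpret D: pair \<Sigma> "dual B" "dual A" by (rule pair_dual[OF pair_axioms])
  show ?thesis using D.lif_comp_cases[of s l k] assms
    by (simp add: rif_compose_dual prime_dual hp_dual mcount_dual)
qed

lemma rif_comp_interface: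
  "interface \<Sigma> (rif (A \<bullet> B)) \<and> (\<forall>l. cnt (rif (A \<bullet> B)) l = cnt (rif B) l + cnt (rif A) l - mcount A B l)"
proof -
  interpret D: pair \<Sigma> "dual B" "dual A" by (rule pair_dual[OF pair_axioms])
  show ?thesis using D.lif_comp_interface by (simp add: rif_compose_dual mcount_dual)
qed

lemma comp_module: "is_module \<Sigma> (A \<bullet> B)"
proof -
  have N: "nodes (A \<bullet> B) = prime A B ` (nodes A \<union> nodes B)" by (rule nodes_compose)
  have fin: "finite \<Sigma>" "finite (nodes (A \<bullet> B))" using mA mB by (auto simp: is_module_def N)
  have E: "edges (A \<bullet> B) \<subseteq> nodes (A \<bullet> B) \<times> nodes (A \<bullet> B)"
    using mA mB unfolding N by (auto simp: compose_def is_module_def)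
  have dl: "dom (lif (A \<bullet> B)) \<subseteq> nodes (A \<bullet> B)"
  proof
    fix s assume "s \<in> dom (lif (A \<bullet> B))"
    then obtain l k where "lif (A \<bullet> B) s = Some (l,k)" by auto
    from lif_comp_cases[OF this] obtain x where "s = prime A B x" "x \<in> nodes A \<union> nodes B"
      using domA domB by blast
    then show "s \<in> nodes (A \<bullet> B)" using N by blast
  qed
  have dr: "dom (rif (A \<bullet> B)) \<subseteq> nodes (A \<bullet> B)"
  proof
    fix s assume "s \<in> dom (rif (A \<bullet> B))"
    then obtain l k where "rif (A \<bullet> B) s = Some (l,k)" by auto
    from rif_comp_cases[OF this] obtain x where "s = prime A B x" "x \<in> nodes A \<union> nodes B"
      using domA domB by blast
    then show "s \<in> nodes (A \<bullet> B)" using N by blast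
  qed
  have lab: "\<forall>s \<in> dom (lif (A \<bullet> B)) \<inter> dom (rif (A \<bullet> B)). lab_of (lif (A \<bullet> B)) s = lab_of (rif (A \<bullet> B)) s"
  proof
    fix s assume "s \<in> dom (lif (A \<bullet> B)) \<inter> dom (rif (A \<bullet> B))"
    then obtain l k l' k' where L: "lif (A \<bullet> B) s = Some (l,k)" and R: "rif (A \<bullet> B) s = Some (l',k')" by auto
    have "l = l'"
      using lif_comp_cases[OF L]
    proof (elim disjE exE conjE)
      fix x assume x: "lif A x = Some (l,k)" "s = prime A B x"
      show "l = l'" using rif_comp_cases[OF R]
      proof (elim disjE exE conjE)
        fix z assume z: "rif B z = Some (l',k')" "s = prime A B z"
        have xA: "x \<in> nodes A" and zB: "z \<in> nodes B" using x z domA domB by auto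
        have "x = z \<or> hp A B x z \<or> hp A B z x" using prime_eq x z by auto
        then have "hp A B x z" using xA zB disj hp_BB by blast
        then have r: "rif A x = lif B z" "rif A x \<noteq> None" using hpD by blast+
        then obtain l0 n where r0: "rif A x = Some (l0,n)" by (cases "rif A x") auto
        then have "l = l0" using consA[OF x(1)] by blast
        then have "lif B z = Some (l,n)" using r r0 by simp
        then show "l = l'" using consB[OF _ z(1)] by blast
      next
        fix z n assume z: "rif A z = Some (l',n)" "s = prime A B z"
        have "z = x" using uniqA x z domA by metis
        then show "l = l'" using consA x z by metis
      qed
    next
      fix y n assume y: "lif B y = Some (l,n)" "\<not> (\<exists>x. hp A B x y)" "s = prime A B y"
      show "l = l'" using rif_comp_cases[OF R]
      proof (elim disjE exE conjE)
        fix z assume z: "rif B z = Some (l',k')" "s = prime A B z"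
        have "z = y" using uniqB y z domB by metis
        then show "l = l'" using consB y z by metis
      next
        fix z n' assume z: "rif A z = Some (l',n')" "\<not> (\<exists>y. hp A B z y)" "s = prime A B z"
        have "y = z \<or> hp A B y z \<or> hp A B z y" using prime_eq y z by auto
        then show "l = l'" using y z domA domB disj hp_BB by blast
      qed
    qed
    then show "lab_of (lif (A \<bullet> B)) s = lab_of (rif (A \<bullet> B)) s" using L R by (simp add: lab_of_def)
  qed
  show ?thesis unfolding is_module_def
    using fin E dl dr lab lif_comp_interface rif_comp_interface by blast
qed

end

lemma nodes_comp: "nodes (X \<bullet> Y) = prime X Y ` (nodes X \<union> nodes Y)"
  by (simp add: compose_def)
lemma edges_comp: "edges (X \<bullet> Y) = (\<lambda>(x, z). (prime X Y x, prime X Y z)) ` (edges X \<union> edges Y)"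
  by (simp add: compose_def)

lemma disj_comp_lift: assumes "(nodes A \<union> nodes B) \<inter> nodes C = {}"
  shows "nodes (A \<bullet> B) \<inter> nodes (lift C) = {}"
proof (rule ccontr)
  assume "nodes (A \<bullet> B) \<inter> nodes (lift C) \<noteq> {}"
  then obtain x c where "x \<in> nodes A \<union> nodes B" "c \<in> nodes C" "prime A B x = {c}"
    unfolding nodes_comp lift_sel by blast
  then show False using prime_mem[of x A B] assms by auto
qed

lemma disj_lift_comp: assumes "nodes A \<inter> (nodes B \<union> nodes C) = {}"
  shows "nodes (lift A) \<inter> nodes (B \<bullet> C) = {}"
proof (rule ccontr)
  assume "nodes (lift A) \<inter> nodes (B \<bullet> C) \<noteq> {}"
  then obtain x a where "x \<in> nodes B \<union> nodes C" "a \<in> nodes A" "prime B C x = {a}"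
    unfolding nodes_comp lift_sel by blast
  then show False using prime_mem[of x B C] assms by auto
qed

definition gL :: "('v,'l) module \<Rightarrow> ('v,'l) module \<Rightarrow> ('v,'l) module \<Rightarrow> 'v \<Rightarrow> 'v set set" where
  "gL A B C v = prime (A \<bullet> B) (lift C) (if v \<in> nodes A \<union> nodes B then prime A B v else {v})"

definition gR :: "('v,'l) module \<Rightarrow> ('v,'l) module \<Rightarrow> ('v,'l) module \<Rightarrow> 'v \<Rightarrow> 'v set set" where
  "gR A B C v = prime (lift A) (B \<bullet> C) (if v \<in> nodes A then {v} else prime B C v)"

locale triple =
  fixes \<Sigma> :: "'l set" and A B C :: "('v,'l) module"
  assumes mA: "is_module \<Sigma> A" and mB: "is_module \<Sigma> B" and mC: "is_module \<Sigma> C"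
    and dAB: "nodes A \<inter> nodes B = {}" and dAC: "nodes A \<inter> nodes C = {}" and dBC: "nodes B \<inter> nodes C = {}"
begin

lemma pAB_ax: "pair \<Sigma> A B" and pBC_ax: "pair \<Sigma> B C"
  using mA mB mC dAB dBC by (auto simp: pair_def)

lemma modAB: "is_module \<Sigma> (A \<bullet> B)" using pair.comp_module[OF pAB_ax] .
lemma modBC: "is_module \<Sigma> (B \<bullet> C)" using pair.comp_module[OF pBC_ax] .
lemma liftA: "is_module \<Sigma> (lift A) \<and> (\<forall>l. cnt (lif (lift A)) l = cnt (lif A) l)
     \<and> (\<forall>l. cnt (rif (lift A)) l = cnt (rif A) l)" using is_module_lift[OF mA] .
lemma liftC: "is_module \<Sigma> (lift C) \<and> (\<forall>l. cnt (lif (lift C)) l = cnt (lif C) l)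
     \<and> (\<forall>l. cnt (rif (lift C)) l = cnt (rif C) l)" using is_module_lift[OF mC] .

lemma pL_ax: "pair \<Sigma> (A \<bullet> B) (lift C)"
  unfolding pair_def using modAB liftC disj_comp_lift[of A B C] dAC dBC by blast
lemma pR_ax: "pair \<Sigma> (lift A) (B \<bullet> C)"
  unfolding pair_def using modBC liftA disj_lift_comp[of A B C] dAB dAC by blast

end

sublocale triple \<subseteq> pAB: pair \<Sigma> A B by (rule pAB_ax)
sublocale triple \<subseteq> pBC: pair \<Sigma> B C by (rule pBC_ax)
sublocale triple \<subseteq> pL: pair \<Sigma> "A \<bullet> B" "lift C" by (rule pL_ax)
sublocale triple \<subseteq> pR: pair \<Sigma> "lift A" "B \<bullet> C" by (rule pR_ax)

context triple
begin

lemma cnts: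
  "cnt (lif (A \<bullet> B)) l = cnt (lif A) l + cnt (lif B) l - min (cnt (rif A) l) (cnt (lif B) l)"
  "cnt (rif (A \<bullet> B)) l = cnt (rif B) l + cnt (rif A) l - min (cnt (rif A) l) (cnt (lif B) l)"
  "cnt (lif (B \<bullet> C)) l = cnt (lif B) l + cnt (lif C) l - min (cnt (rif B) l) (cnt (lif C) l)"
  "cnt (lif (lift A)) l = cnt (lif A) l" "cnt (rif (lift A)) l = cnt (rif A) l"
  "cnt (lif (lift C)) l = cnt (lif C) l"
  using pAB.lif_comp_interface pAB.rif_comp_interface pBC.lif_comp_interface liftA liftC
    pAB.mcount_eq pBC.mcount_eq by auto

lemma K1: assumes "hp A B a b" shows "gL A B C a = gL A B C b \<and> gR A B C a = gR A B C b"
proof -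
  have h: "a \<in> nodes A" "b \<in> nodes B" "rif A a = lif B b" "rif A a \<noteq> None" using pAB.hpD[OF assms] by blast+
  have "prime A B a = prime A B b" using pAB.prime_hp[OF assms] by simp
  then have 1: "gL A B C a = gL A B C b" using h by (simp add: gL_def)
  obtain p where p: "rif A a = Some p" using h by auto
  have "b \<in> dom (lif B)" using h(3) p by (metis domI)
  then have "lif (B \<bullet> C) (prime B C b) = lif B b" by (rule pBC.lif_comp_A)
  then have "hp (lift A) (B \<bullet> C) {a} (prime B C b)"
    using pR.hpI[of "{a}" p "prime B C b"] p h by (simp add: lift_sel)
  then have "prime (lift A) (B \<bullet> C) {a} = prime (lift A) (B \<bullet> C) (prime B C b)"
    using pR.prime_hp by auto
  then have 2: "gR A B C a = gR A B C b" using h dAB by (auto simp: gR_def)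
  show ?thesis using 1 2 by simp
qed

lemma K2: assumes "hp B C b c" shows "gL A B C b = gL A B C c \<and> gR A B C b = gR A B C c"
proof -
  have h: "b \<in> nodes B" "c \<in> nodes C" "rif B b = lif C c" "rif B b \<noteq> None" using pBC.hpD[OF assms] by blast+
  have "prime B C b = prime B C c" using pBC.prime_hp[OF assms] by simp
  then have 2: "gR A B C b = gR A B C c" using h dAB dAC by (auto simp: gR_def)
  obtain p where p: "rif B b = Some p" using h by auto
  have "b \<in> dom (rif B)" using p by (metis domI)
  then have "rif (A \<bullet> B) (prime A B b) = rif B b" by (rule pAB.rif_comp_B)
  then have "hp (A \<bullet> B) (lift C) (prime A B b) {c}"
    using pL.hpI[of "prime A B b" p "{c}"] p h by (simp add: lift_sel)
  then have "prime (A \<bullet> B) (lift C) (prime A B b) = prime (A \<bullet> B) (lift C) {c}"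
    using pL.prime_hp by auto
  then have 1: "gL A B C b = gL A B C c" using h dAC dBC by (auto simp: gL_def)
  show ?thesis using 1 2 by simp
qed

lemma sameAB: "prime A B x = prime A B z \<Longrightarrow> gL A B C x = gL A B C z \<and> gR A B C x = gR A B C z"
  using pAB.prime_eq K1 by metis

lemma K3: assumes a: "rif A a = Some (l,na)" and c: "lif C c = Some (l,nc)"
  and ua: "\<not> (\<exists>b. hp A B a b)" and uc: "\<not> (\<exists>b. hp B C b c)"
  and e: "cnt (rif B) l + na = cnt (lif B) l + nc"
  shows "hp (A \<bullet> B) (lift C) (prime A B a) {c} \<and> hp (lift A) (B \<bullet> C) {a} (prime B C c)"
proof -
  have na: "cnt (lif B) l < na" using pAB.matchA[OF a] ua by simp
  have na2: "na \<le> cnt (rif A) l" using interface_elim[OF pAB.iA(2) a] by simp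
  have nc: "cnt (rif B) l < nc" using pBC.matchB[OF c] uc by simp
  have nc2: "nc \<le> cnt (lif C) l" using interface_elim[OF pBC.iB(1) c] by simp
  have "rif (A \<bullet> B) (prime A B a) = Some (l, cnt (rif B) l + na - mcount A B l)"
    using pAB.rif_comp_A[OF a ua] .
  also have "cnt (rif B) l + na - mcount A B l = nc" using pAB.mcount_eq[of l] na na2 e by auto
  finally have 1: "hp (A \<bullet> B) (lift C) (prime A B a) {c}"
    using pL.hpI c by (simp add: lift_sel)
  have "lif (B \<bullet> C) (prime B C c) = Some (l, cnt (lif B) l + nc - mcount B C l)"
    using pBC.lif_comp_B[OF c uc] .
  also have "cnt (lif B) l + nc - mcount B C l = na" using pBC.mcount_eq[of l] nc nc2 e by auto
  finally have 2: "hp (lift A) (B \<bullet> C) {a} (prime B C c)"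
    using pR.hpI a by (simp add: lift_sel)
  show ?thesis using 1 2 by simp
qed

lemma K3': assumes "rif A a = Some (l,na)" "lif C c = Some (l,nc)"
  "\<not> (\<exists>b. hp A B a b)" "\<not> (\<exists>b. hp B C b c)" "cnt (rif B) l + na = cnt (lif B) l + nc"
  shows "gL A B C a = gL A B C c \<and> gR A B C a = gR A B C c"
proof -
  note k = K3[OF assms]
  have h: "a \<in> nodes A" "c \<in> nodes C" using assms pAB.domA pBC.domB by auto
  have "prime (A \<bullet> B) (lift C) (prime A B a) = prime (A \<bullet> B) (lift C) {c}"
    using pL.prime_hp k by auto
  then have 1: "gL A B C a = gL A B C c" using h dAC dBC by (auto simp: gL_def)
  have "prime (lift A) (B \<bullet> C) {a} = prime (lift A) (B \<bullet> C) (prime B C c)"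
    using pR.prime_hp k by auto
  then have 2: "gR A B C a = gR A B C c" using h dAB dAC by (auto simp: gR_def)
  show ?thesis using 1 2 by simp
qed

lemma Lmatch: assumes "hp (A \<bullet> B) (lift C) (prime A B x) {c}"
  shows "gL A B C x = gL A B C c \<and> gR A B C x = gR A B C c"
proof -
  have h0: "rif (A \<bullet> B) (prime A B x) = lif (lift C) {c}" "rif (A \<bullet> B) (prime A B x) \<noteq> None"
    using pL.hpD[OF assms] by blast+
  then have h: "rif (A \<bullet> B) (prime A B x) = lif C c" "lif C c \<noteq> None" by (simp_all add: lift_sel)
  then obtain l nc where c: "lif C c = Some (l,nc)" by auto
  then have r: "rif (A \<bullet> B) (prime A B x) = Some (l,nc)" using h by simp
  show ?thesis using pAB.rif_comp_cases[OF r]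
  proof (elim disjE exE conjE)
    fix z assume z: "rif B z = Some (l,nc)" "prime A B x = prime A B z"
    have "hp B C z c" using pBC.hpI z c by blast
    then show ?thesis using K2 sameAB[OF z(2)] by metis
  next
    fix z n assume z: "rif A z = Some (l,n)" "\<not> (\<exists>y. hp A B z y)" "prime A B x = prime A B z"
      "nc = cnt (rif B) l + n - mcount A B l"
    have n: "cnt (lif B) l < n" using pAB.matchA[OF z(1)] z(2) by simp
    have n2: "n \<le> cnt (rif A) l" using interface_elim[OF pAB.iA(2) z(1)] by simp
    have m: "mcount A B l = cnt (lif B) l" using pAB.mcount_eq[of l] n n2 by simp
    have uc: "\<not> (\<exists>b. hp B C b c)"
    proof
      assume "\<exists>b. hp B C b c"
      then have "nc \<le> cnt (rif B) l" using pBC.matchB[OF c] by simp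
      then show False using z(4) m n by simp
    qed
    have "cnt (rif B) l + n = cnt (lif B) l + nc" using z(4) m n by simp
    then show ?thesis using K3'[OF z(1) c z(2) uc] sameAB[OF z(3)] by metis
  qed
qed

lemma hpn: "hp A B x y \<Longrightarrow> x \<in> nodes A \<and> y \<in> nodes B" using pAB.hpD by blast

abbreviation "V \<equiv> nodes A \<union> nodes B \<union> nodes C"

lemma cls: assumes v: "v \<in> V" and w: "w \<in> V" and e: "gL A B C v = gL A B C w"
  shows "gR A B C v = gR A B C w"
proof -
  define sv where "sv u = (if u \<in> nodes A \<union> nodes B then prime A B u else {u})" for u
  have g: "gL A B C u = prime (A \<bullet> B) (lift C) (sv u)" for u by (simp add: gL_def sv_def)
  have shape: "u \<in> nodes A \<union> nodes B \<and> u' \<in> nodes C \<and> sv u = prime A B u \<and> sv u' = {u'}"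
    if "hp (A \<bullet> B) (lift C) (sv u) (sv u')" "u \<in> V" "u' \<in> V" for u u'
  proof -
    have n: "sv u \<in> nodes (A \<bullet> B)" "sv u' \<in> nodes (lift C)" using pL.hpD[OF that(1)] by auto
    have "u' \<notin> nodes A \<union> nodes B"
    proof
      assume "u' \<in> nodes A \<union> nodes B"
      then have "prime A B u' \<in> (\<lambda>x. {x}) ` nodes C" using n by (simp add: sv_def lift_sel)
      then obtain c where "prime A B u' = {c}" "c \<in> nodes C" by auto
      then show False using prime_mem[of u' A B] \<open>u' \<in> nodes A \<union> nodes B\<close> dAC dBC by auto
    qed
    moreover have "u \<in> nodes A \<union> nodes B"
    proof (rule ccontr)
      assume "u \<notin> nodes A \<union> nodes B"
      then have "{u} \<in> prime A B ` (nodes A \<union> nodes B)" using n by (simp add: sv_def nodes_comp)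
      then obtain x where "{u} = prime A B x" "x \<in> nodes A \<union> nodes B" by auto
      then show False using prime_mem[of x A B] \<open>u \<notin> nodes A \<union> nodes B\<close> by auto
    qed
    ultimately show ?thesis using that by (simp add: sv_def)
  qed
  have "sv v = sv w \<or> hp (A \<bullet> B) (lift C) (sv v) (sv w) \<or> hp (A \<bullet> B) (lift C) (sv w) (sv v)"
    using e pL.prime_eq by (simp add: g)
  then show ?thesis
  proof (elim disjE)
    assume s: "sv v = sv w"
    show ?thesis
    proof (cases "v \<in> nodes A \<union> nodes B"; cases "w \<in> nodes A \<union> nodes B")
      assume "v \<in> nodes A \<union> nodes B" "w \<in> nodes A \<union> nodes B"
      then have "prime A B v = prime A B w" using s by (simp add: sv_def)
      from sameAB[OF this] show ?thesis by blast
    next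
      assume a: "v \<in> nodes A \<union> nodes B" "w \<notin> nodes A \<union> nodes B"
      then have "prime A B v = {w}" using s by (simp add: sv_def)
      then have "w \<in> prime A B v" by simp
      then have "w = v \<or> hp A B v w \<or> hp A B w v" by (simp add: in_prime)
      moreover have "\<not> hp A B v w" "\<not> hp A B w v" using a hpn by blast+
      ultimately show ?thesis using a by blast
    next
      assume a: "v \<notin> nodes A \<union> nodes B" "w \<in> nodes A \<union> nodes B"
      then have "prime A B w = {v}" using s by (simp add: sv_def)
      then have "v \<in> prime A B w" by simp
      then have "v = w \<or> hp A B w v \<or> hp A B v w" by (simp add: in_prime)
      moreover have "\<not> hp A B w v" "\<not> hp A B v w" using a hpn by blast+
      ultimately show ?thesis using a by blast
    next
      assume a: "v \<notin> nodes A \<union> nodes B" "w \<notin> nodes A \<union> nodes B"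
      then show ?thesis using s by (simp add: sv_def)
    qed
  next
    assume h: "hp (A \<bullet> B) (lift C) (sv v) (sv w)"
    then show ?thesis using shape[OF h v w] Lmatch by metis
  next
    assume h: "hp (A \<bullet> B) (lift C) (sv w) (sv v)"
    then show ?thesis using shape[OF h w v] Lmatch by metis
  qed
qed

end

lemma arith1:
  fixes pA pB pC qA qB n mAB mBC mL mR :: nat
  assumes "mAB = min qA pB" "mBC = min qB pC" "qB + qA - mAB < n" "n \<le> pC" "qB < n"
    "qA < pB + n - mBC" "mL = min (qB + qA - mAB) pC" "mR = min qA (pB + pC - mBC)"
  shows "pA + pB - mAB + n - mL = pA + (pB + n - mBC) - mR"
  using assms by (simp add: min_def split: if_splits)

lemma arith2:
  fixes pA pB pC qA qB n mAB mBC mR :: nat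
  assumes "mAB = min qA pB" "mBC = min qB pC" "qA < n" "n \<le> pB" "mR = min qA (pB + pC - mBC)"
  shows "pA + n - mAB = pA + n - mR"
  using assms by (simp add: min_def split: if_splits)

context triple
begin

lemma lifA: assumes a: "a \<in> nodes A"
  shows "lif ((A \<bullet> B) \<bullet> lift C) (gL A B C a) = lif (lift A \<bullet> (B \<bullet> C)) (gR A B C a)"
proof -
  have gl: "gL A B C a = prime (A \<bullet> B) (lift C) (prime A B a)" using a by (simp add: gL_def)
  have gr: "gR A B C a = prime (lift A) (B \<bullet> C) {a}" using a by (simp add: gR_def)
  have pa: "prime A B a \<in> nodes (A \<bullet> B)" using a by (simp add: nodes_comp)
  have sa: "{a} \<in> nodes (lift A)" using a by (simp add: lift_sel)
  show ?thesis
  proof (cases "lif A a")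
    case None
    have "lif (A \<bullet> B) (prime A B a) = None" using pAB.lif_comp_A_None[OF a None] .
    then have "lif ((A \<bullet> B) \<bullet> lift C) (gL A B C a) = None" using pL.lif_comp_A_None[OF pa] gl by simp
    moreover have "lif (lift A \<bullet> (B \<bullet> C)) (gR A B C a) = None"
      using pR.lif_comp_A_None[OF sa] gr None by (simp add: lift_sel)
    ultimately show ?thesis by simp
  next
    case (Some p)
    have d: "a \<in> dom (lif A)" using Some by auto
    have 1: "lif (A \<bullet> B) (prime A B a) = lif A a" using pAB.lif_comp_A[OF d] .
    then have "prime A B a \<in> dom (lif (A \<bullet> B))" using Some by auto
    then have "lif ((A \<bullet> B) \<bullet> lift C) (gL A B C a) = lif A a" using pL.lif_comp_A 1 gl by simp
    moreover have "{a} \<in> dom (lif (lift A))" using Some by (simp add: lift_sel domI)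
    then have "lif (lift A \<bullet> (B \<bullet> C)) (gR A B C a) = lif A a" using pR.lif_comp_A gr by (simp add: lift_sel)
    ultimately show ?thesis by simp
  qed
qed

lemma lifB: assumes b: "b \<in> nodes B"
  shows "lif ((A \<bullet> B) \<bullet> lift C) (gL A B C b) = lif (lift A \<bullet> (B \<bullet> C)) (gR A B C b)"
proof (cases "\<exists>a. hp A B a b")
  case True
  then obtain a where h: "hp A B a b" by blast
  then show ?thesis using K1[OF h] lifA hpn by metis
next
  case um: False
  have gl: "gL A B C b = prime (A \<bullet> B) (lift C) (prime A B b)" using b by (simp add: gL_def)
  have gr: "gR A B C b = prime (lift A) (B \<bullet> C) (prime B C b)" using b dAB by (auto simp: gR_def)
  have pb: "prime A B b \<in> nodes (A \<bullet> B)" using b by (simp add: nodes_comp)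
  have pb2: "prime B C b \<in> nodes (B \<bullet> C)" using b by (simp add: nodes_comp)
  show ?thesis
  proof (cases "lif B b")
    case None
    have "lif (A \<bullet> B) (prime A B b) = None" using pAB.lif_comp_B_None[OF b None] .
    then have "lif ((A \<bullet> B) \<bullet> lift C) (gL A B C b) = None" using pL.lif_comp_A_None[OF pb] gl by simp
    moreover have "lif (B \<bullet> C) (prime B C b) = None" using pBC.lif_comp_A_None[OF b None] .
    then have "lif (lift A \<bullet> (B \<bullet> C)) (gR A B C b) = None" using pR.lif_comp_B_None[OF pb2] gr by simp
    ultimately show ?thesis by simp
  next
    case (Some p)
    obtain l n where p: "lif B b = Some (l,n)" using Some by (cases p) auto
    have 1: "lif (A \<bullet> B) (prime A B b) = Some (l, cnt (lif A) l + n - mcount A B l)"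
      using pAB.lif_comp_B[OF p um] .
    then have "prime A B b \<in> dom (lif (A \<bullet> B))" by auto
    then have L: "lif ((A \<bullet> B) \<bullet> lift C) (gL A B C b) = Some (l, cnt (lif A) l + n - mcount A B l)"
      using pL.lif_comp_A 1 gl by simp
    have d: "b \<in> dom (lif B)" using p by auto
    have 2: "lif (B \<bullet> C) (prime B C b) = Some (l,n)" using pBC.lif_comp_A[OF d] p by simp
    have um2: "\<not> (\<exists>x. hp (lift A) (B \<bullet> C) x (prime B C b))"
    proof
      assume "\<exists>x. hp (lift A) (B \<bullet> C) x (prime B C b)"
      then obtain x where hx: "hp (lift A) (B \<bullet> C) x (prime B C b)" by blast
      have "x \<in> nodes (lift A)" "rif (lift A) x = lif (B \<bullet> C) (prime B C b)"
        using pR.hpD[OF hx] by blast+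
      then obtain a where "x = {a}" "rif A a = Some (l,n)" using 2 by (auto simp: lift_sel)
      then have "hp A B a b" using pAB.hpI p by blast
      then show False using um by blast
    qed
    have R: "lif (lift A \<bullet> (B \<bullet> C)) (gR A B C b) =
        Some (l, cnt (lif (lift A)) l + n - mcount (lift A) (B \<bullet> C) l)"
      using pR.lif_comp_B[OF 2 um2] gr by simp
    have u: "cnt (rif A) l < n" "n \<le> cnt (lif B) l" using pAB.unmatched[OF p um] by auto
    have "cnt (lif A) l + n - mcount A B l = cnt (lif A) l + n - mcount (lift A) (B \<bullet> C) l"
      apply (rule arith2[where pC = "cnt (lif C) l" and qB = "cnt (rif B) l" and mBC = "min (cnt (rif B) l) (cnt (lif C) l)"])
      using u pAB.mcount_eq pR.mcount_eq cnts by auto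
    then show ?thesis using L R cnts by simp
  qed
qed

lemma lifC: assumes c: "c \<in> nodes C"
  shows "lif ((A \<bullet> B) \<bullet> lift C) (gL A B C c) = lif (lift A \<bullet> (B \<bullet> C)) (gR A B C c)"
proof -
  have gl: "gL A B C c = prime (A \<bullet> B) (lift C) {c}" using c dAC dBC by (auto simp: gL_def)
  have gr: "gR A B C c = prime (lift A) (B \<bullet> C) (prime B C c)" using c dAC by (auto simp: gR_def)
  have sc: "{c} \<in> nodes (lift C)" using c by (simp add: lift_sel)
  have pc2: "prime B C c \<in> nodes (B \<bullet> C)" using c by (simp add: nodes_comp)
  show ?thesis
  proof (cases "lif C c")
    case None
    have "lif ((A \<bullet> B) \<bullet> lift C) (gL A B C c) = None"
      using pL.lif_comp_B_None[OF sc] gl None by (simp add: lift_sel)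
    moreover have "lif (B \<bullet> C) (prime B C c) = None" using pBC.lif_comp_B_None[OF c None] .
    then have "lif (lift A \<bullet> (B \<bullet> C)) (gR A B C c) = None" using pR.lif_comp_B_None[OF pc2] gr by simp
    ultimately show ?thesis by simp
  next
    case (Some p)
    obtain l n where p: "lif C c = Some (l,n)" using Some by (cases p) auto
    show ?thesis
    proof (cases "\<exists>b. hp B C b c")
      case True
      then obtain b where h: "hp B C b c" by blast
      have "b \<in> nodes B" using pBC.hpD[OF h] by blast
      then show ?thesis using K2[OF h] lifB by metis
    next
      case umB: False
      show ?thesis
      proof (cases "\<exists>s. hp (A \<bullet> B) (lift C) s {c}")
        case True
        then obtain s where h: "hp (A \<bullet> B) (lift C) s {c}" by blast
        have "s \<in> nodes (A \<bullet> B)" using pL.hpD[OF h] by blast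
        then obtain x where x: "x \<in> nodes A \<union> nodes B" "s = prime A B x" by (auto simp: nodes_comp)
        then have e: "gL A B C x = gL A B C c \<and> gR A B C x = gR A B C c" using Lmatch h by blast
        show ?thesis
        proof (cases "x \<in> nodes A")
          case True then show ?thesis using lifA e by metis
        next
          case False then have "x \<in> nodes B" using x by blast
          then show ?thesis using lifB e by metis
        qed
      next
        case umL: False
        have pC': "lif (lift C) {c} = Some (l,n)" using p by (simp add: lift_sel)
        have L: "lif ((A \<bullet> B) \<bullet> lift C) (gL A B C c) =
          Some (l, cnt (lif (A \<bullet> B)) l + n - mcount (A \<bullet> B) (lift C) l)"
          using pL.lif_comp_B[OF pC' umL] gl by simp
        have uL: "cnt (rif (A \<bullet> B)) l < n" "n \<le> cnt (lif (lift C)) l" using pL.unmatched[OF pC' umL] by auto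
        have uB: "cnt (rif B) l < n" "n \<le> cnt (lif C) l" using pBC.unmatched[OF p umB] by auto
        have mBC: "mcount B C l = cnt (rif B) l" using pBC.mcount_eq[of l] uB by simp
        have 2: "lif (B \<bullet> C) (prime B C c) = Some (l, cnt (lif B) l + n - cnt (rif B) l)"
          using pBC.lif_comp_B[OF p umB] mBC by simp
        have umR: "\<not> (\<exists>x. hp (lift A) (B \<bullet> C) x (prime B C c))"
        proof
          assume "\<exists>x. hp (lift A) (B \<bullet> C) x (prime B C c)"
          then obtain x where hx: "hp (lift A) (B \<bullet> C) x (prime B C c)" by blast
          have "x \<in> nodes (lift A)" "rif (lift A) x = lif (B \<bullet> C) (prime B C c)"
            using pR.hpD[OF hx] by blast+
          then obtain a where a: "x = {a}" "rif A a = Some (l, cnt (lif B) l + n - cnt (rif B) l)"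
            using 2 by (auto simp: lift_sel)
          have "\<not> (\<exists>b. hp A B a b)" using pAB.matchA[OF a(2)] uB by simp
          then have "hp (A \<bullet> B) (lift C) (prime A B a) {c}"
            using K3[OF a(2) p _ umB] uB by simp
          then show False using umL by blast
        qed
        have R: "lif (lift A \<bullet> (B \<bullet> C)) (gR A B C c) =
            Some (l, cnt (lif (lift A)) l + (cnt (lif B) l + n - cnt (rif B) l) - mcount (lift A) (B \<bullet> C) l)"
          using pR.lif_comp_B[OF 2 umR] gr by simp
        have uR: "cnt (rif (lift A)) l < cnt (lif B) l + n - cnt (rif B) l"
          using pR.unmatched[OF 2 umR] by auto
        have "cnt (lif (A \<bullet> B)) l + n - mcount (A \<bullet> B) (lift C) l =
              cnt (lif (lift A)) l + (cnt (lif B) l + n - cnt (rif B) l) - mcount (lift A) (B \<bullet> C) l"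
          unfolding cnts
          apply (rule arith1[where pC = "cnt (lif C) l" and qB = "cnt (rif B) l" and qA = "cnt (rif A) l"
                 and mAB = "min (cnt (rif A) l) (cnt (lif B) l)"])
          using uL uB uR pL.mcount_eq pR.mcount_eq cnts mBC pBC.mcount_eq by auto
        then show ?thesis using L R by simp
      qed
    qed
  qed
qed

lemma lifV: "v \<in> V \<Longrightarrow> lif ((A \<bullet> B) \<bullet> lift C) (gL A B C v) = lif (lift A \<bullet> (B \<bullet> C)) (gR A B C v)"
  using lifA lifB lifC by blast

end

lemma triple_dual: "triple \<Sigma> A B C \<Longrightarrow> triple \<Sigma> (dual C) (dual B) (dual A)"
  by (auto simp: triple_def is_module_dual)

lemma LD: "(dual C \<bullet> dual B) \<bullet> lift (dual A) = dual (lift A \<bullet> (B \<bullet> C))"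
  by (simp add: dual_comp dual_lift)
lemma RD: "lift (dual C) \<bullet> (dual B \<bullet> dual A) = dual ((A \<bullet> B) \<bullet> lift C)"
  by (simp add: dual_comp dual_lift)

context triple
begin

lemma gL_dual: "v \<in> V \<Longrightarrow> gL (dual C) (dual B) (dual A) v = gR A B C v"
  unfolding gL_def gR_def dual_comp[symmetric] dual_lift[symmetric] prime_dual dual_sel
  using dAB dAC dBC by auto

lemma gR_dual: "v \<in> V \<Longrightarrow> gR (dual C) (dual B) (dual A) v = gL A B C v"
  unfolding gL_def gR_def dual_comp[symmetric] dual_lift[symmetric] prime_dual dual_sel
  using dAB dAC dBC by auto

lemma rifV: assumes v: "v \<in> V"
  shows "rif ((A \<bullet> B) \<bullet> lift C) (gL A B C v) = rif (lift A \<bullet> (B \<bullet> C)) (gR A B C v)"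
proof -
  interpret D: triple \<Sigma> "dual C" "dual B" "dual A" by (rule triple_dual) unfold_locales
  have "v \<in> nodes (dual C) \<union> nodes (dual B) \<union> nodes (dual A)" using v by auto
  from D.lifV[OF this] show ?thesis unfolding LD RD gL_dual[OF v] gR_dual[OF v] dual_sel by simp
qed

lemma cls_conv: assumes v: "v \<in> V" and w: "w \<in> V" and e: "gR A B C v = gR A B C w"
  shows "gL A B C v = gL A B C w"
proof -
  interpret D: triple \<Sigma> "dual C" "dual B" "dual A" by (rule triple_dual) unfold_locales
  have v': "v \<in> nodes (dual C) \<union> nodes (dual B) \<union> nodes (dual A)" using v by auto
  have w': "w \<in> nodes (dual C) \<union> nodes (dual B) \<union> nodes (dual A)" using w by auto
  show ?thesis using D.cls[OF v' w'] e gL_dual gR_dual v w by metis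
qed

lemma eqv: "v \<in> V \<Longrightarrow> w \<in> V \<Longrightarrow> gL A B C v = gL A B C w \<longleftrightarrow> gR A B C v = gR A B C w"
  using cls cls_conv by blast

lemma EA: "edges A \<subseteq> nodes A \<times> nodes A" and EB: "edges B \<subseteq> nodes B \<times> nodes B"
  and EC: "edges C \<subseteq> nodes C \<times> nodes C"
  using mA mB mC by (auto simp: is_module_def)

lemma gL_AB: "x \<in> nodes A \<union> nodes B \<Longrightarrow> gL A B C x = prime (A \<bullet> B) (lift C) (prime A B x)"
  by (simp add: gL_def)
lemma gL_C: "x \<in> nodes C \<Longrightarrow> gL A B C x = prime (A \<bullet> B) (lift C) {x}"
  using dAC dBC by (auto simp: gL_def)
lemma gR_A: "x \<in> nodes A \<Longrightarrow> gR A B C x = prime (lift A) (B \<bullet> C) {x}"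
  by (simp add: gR_def)
lemma gR_BC: "x \<in> nodes B \<union> nodes C \<Longrightarrow> gR A B C x = prime (lift A) (B \<bullet> C) (prime B C x)"
  using dAB dAC by (auto simp: gR_def)

lemma nodesL: "nodes ((A \<bullet> B) \<bullet> lift C) = gL A B C ` V"
proof -
  have 1: "gL A B C ` (nodes A \<union> nodes B) = prime (A \<bullet> B) (lift C) ` prime A B ` (nodes A \<union> nodes B)"
    unfolding image_image by (rule image_cong) (auto simp: gL_def)
  have 2: "gL A B C ` nodes C = prime (A \<bullet> B) (lift C) ` (\<lambda>x. {x}) ` nodes C"
    unfolding image_image by (rule image_cong) (use dAC dBC in \<open>auto simp: gL_def\<close>)
  have "nodes ((A \<bullet> B) \<bullet> lift C) = prime (A \<bullet> B) (lift C) ` (prime A B ` (nodes A \<union> nodes B) \<union> (\<lambda>x. {x}) ` nodes C)"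
    by (simp add: nodes_comp lift_sel)
  also have "\<dots> = gL A B C ` (nodes A \<union> nodes B) \<union> gL A B C ` nodes C"
    by (subst image_Un) (simp only: 1 2)
  also have "\<dots> = gL A B C ` V" by blast
  finally show ?thesis .
qed

lemma nodesR: "nodes (lift A \<bullet> (B \<bullet> C)) = gR A B C ` V"
proof -
  have 1: "gR A B C ` (nodes B \<union> nodes C) = prime (lift A) (B \<bullet> C) ` prime B C ` (nodes B \<union> nodes C)"
    unfolding image_image by (rule image_cong) (use dAB dAC in \<open>auto simp: gR_def\<close>)
  have 2: "gR A B C ` nodes A = prime (lift A) (B \<bullet> C) ` (\<lambda>x. {x}) ` nodes A"
    unfolding image_image by (rule image_cong) (auto simp: gR_def)
  have "nodes (lift A \<bullet> (B \<bullet> C)) = prime (lift A) (B \<bullet> C) ` ((\<lambda>x. {x}) ` nodes A \<union> prime B C ` (nodes B \<union> nodes C))"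
    by (simp add: nodes_comp lift_sel)
  also have "\<dots> = gR A B C ` nodes A \<union> gR A B C ` (nodes B \<union> nodes C)"
    by (subst image_Un) (simp only: 1 2)
  also have "\<dots> = gR A B C ` V" by blast
  finally show ?thesis .
qed

lemma edgesL: "edges ((A \<bullet> B) \<bullet> lift C) = (\<lambda>(x,z). (gL A B C x, gL A B C z)) ` (edges A \<union> edges B \<union> edges C)"
proof -
  have 1: "(\<lambda>(x,z). (gL A B C x, gL A B C z)) ` (edges A \<union> edges B) =
    (\<lambda>(x, z). (prime (A \<bullet> B) (lift C) x, prime (A \<bullet> B) (lift C) z)) `
      (\<lambda>(x, z). (prime A B x, prime A B z)) ` (edges A \<union> edges B)"
    unfolding image_image by (rule image_cong[OF refl]) (auto dest!: subsetD[OF EA] subsetD[OF EB] simp: gL_AB)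
  have 2: "(\<lambda>(x,z). (gL A B C x, gL A B C z)) ` edges C =
    (\<lambda>(x, z). (prime (A \<bullet> B) (lift C) x, prime (A \<bullet> B) (lift C) z)) ` (\<lambda>(x, z). ({x}, {z})) ` edges C"
    unfolding image_image by (rule image_cong[OF refl]) (auto dest!: subsetD[OF EC] simp: gL_C)
  have "edges ((A \<bullet> B) \<bullet> lift C) = (\<lambda>(x, z). (prime (A \<bullet> B) (lift C) x, prime (A \<bullet> B) (lift C) z)) `
      ((\<lambda>(x, z). (prime A B x, prime A B z)) ` (edges A \<union> edges B) \<union> (\<lambda>(x, z). ({x}, {z})) ` edges C)"
    by (simp add: edges_comp lift_sel)
  also have "\<dots> = (\<lambda>(x,z). (gL A B C x, gL A B C z)) ` (edges A \<union> edges B) \<union> (\<lambda>(x,z). (gL A B C x, gL A B C z)) ` edges C"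
    by (subst image_Un) (simp only: 1 2)
  also have "\<dots> = (\<lambda>(x,z). (gL A B C x, gL A B C z)) ` (edges A \<union> edges B \<union> edges C)" by blast
  finally show ?thesis .
qed

lemma edgesR: "edges (lift A \<bullet> (B \<bullet> C)) = (\<lambda>(x,z). (gR A B C x, gR A B C z)) ` (edges A \<union> edges B \<union> edges C)"
proof -
  have 1: "(\<lambda>(x,z). (gR A B C x, gR A B C z)) ` (edges B \<union> edges C) =
    (\<lambda>(x, z). (prime (lift A) (B \<bullet> C) x, prime (lift A) (B \<bullet> C) z)) `
      (\<lambda>(x, z). (prime B C x, prime B C z)) ` (edges B \<union> edges C)"
    unfolding image_image by (rule image_cong[OF refl]) (auto dest!: subsetD[OF EB] subsetD[OF EC] simp: gR_BC)
  have 2: "(\<lambda>(x,z). (gR A B C x, gR A B C z)) ` edges A =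
    (\<lambda>(x, z). (prime (lift A) (B \<bullet> C) x, prime (lift A) (B \<bullet> C) z)) ` (\<lambda>(x, z). ({x}, {z})) ` edges A"
    unfolding image_image by (rule image_cong[OF refl]) (auto dest!: subsetD[OF EA] simp: gR_A)
  have "edges (lift A \<bullet> (B \<bullet> C)) = (\<lambda>(x, z). (prime (lift A) (B \<bullet> C) x, prime (lift A) (B \<bullet> C) z)) `
      ((\<lambda>(x, z). ({x}, {z})) ` edges A \<union> (\<lambda>(x, z). (prime B C x, prime B C z)) ` (edges B \<union> edges C))"
    by (simp add: edges_comp lift_sel)
  also have "\<dots> = (\<lambda>(x,z). (gR A B C x, gR A B C z)) ` edges A \<union> (\<lambda>(x,z). (gR A B C x, gR A B C z)) ` (edges B \<union> edges C)"
    by (subst image_Un) (simp only: 1 2)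
  also have "\<dots> = (\<lambda>(x,z). (gR A B C x, gR A B C z)) ` (edges A \<union> edges B \<union> edges C)" by blast
  finally show ?thesis .
qed

lemma iso: "module_iso ((A \<bullet> B) \<bullet> lift C) (lift A \<bullet> (B \<bullet> C))"
proof -
  define f where "f S = gR A B C (SOME v. v \<in> V \<and> gL A B C v = S)" for S
  have fg: "f (gL A B C v) = gR A B C v" if v: "v \<in> V" for v
  proof -
    have "\<exists>v'. v' \<in> V \<and> gL A B C v' = gL A B C v" using v by blast
    then have "(SOME v'. v' \<in> V \<and> gL A B C v' = gL A B C v) \<in> V \<and>
               gL A B C (SOME v'. v' \<in> V \<and> gL A B C v' = gL A B C v) = gL A B C v"
      by (rule someI_ex)
    then show ?thesis unfolding f_def using cls v by blast
  qed
  have bij: "bij_betw f (gL A B C ` V) (gR A B C ` V)"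
  proof (rule bij_betw_imageI)
    show "inj_on f (gL A B C ` V)"
    proof (rule inj_onI)
      fix x y assume "x \<in> gL A B C ` V" "y \<in> gL A B C ` V" "f x = f y"
      then obtain v w where "v \<in> V" "w \<in> V" "x = gL A B C v" "y = gL A B C w" "f x = f y" by blast
      then show "x = y" using fg cls_conv by metis
    qed
    show "f ` gL A B C ` V = gR A B C ` V"
      unfolding image_image by (rule image_cong) (auto simp: fg)
  qed
  have E: "edges A \<union> edges B \<union> edges C \<subseteq> V \<times> V" using EA EB EC by blast
  have edg: "(gL A B C v, gL A B C w) \<in> edges ((A \<bullet> B) \<bullet> lift C) \<longleftrightarrow>
             (gR A B C v, gR A B C w) \<in> edges (lift A \<bullet> (B \<bullet> C))" if "v \<in> V" "w \<in> V" for v w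
  proof -
    have "(gL A B C v, gL A B C w) \<in> edges ((A \<bullet> B) \<bullet> lift C) \<longleftrightarrow>
      (\<exists>x z. (x,z) \<in> edges A \<union> edges B \<union> edges C \<and> gL A B C v = gL A B C x \<and> gL A B C w = gL A B C z)"
      unfolding edgesL by auto
    also have "\<dots> \<longleftrightarrow>
      (\<exists>x z. (x,z) \<in> edges A \<union> edges B \<union> edges C \<and> gR A B C v = gR A B C x \<and> gR A B C w = gR A B C z)"
    proof
      assume "\<exists>x z. (x,z) \<in> edges A \<union> edges B \<union> edges C \<and> gL A B C v = gL A B C x \<and> gL A B C w = gL A B C z"
      then obtain x z where h: "(x,z) \<in> edges A \<union> edges B \<union> edges C" "gL A B C v = gL A B C x" "gL A B C w = gL A B C z"
        by blast
      have "x \<in> V" "z \<in> V" using h(1) E by blast+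
      then have "gR A B C v = gR A B C x" "gR A B C w = gR A B C z" using h eqv that by blast+
      then show "\<exists>x z. (x,z) \<in> edges A \<union> edges B \<union> edges C \<and> gR A B C v = gR A B C x \<and> gR A B C w = gR A B C z"
        using h(1) by blast
    next
      assume "\<exists>x z. (x,z) \<in> edges A \<union> edges B \<union> edges C \<and> gR A B C v = gR A B C x \<and> gR A B C w = gR A B C z"
      then obtain x z where h: "(x,z) \<in> edges A \<union> edges B \<union> edges C" "gR A B C v = gR A B C x" "gR A B C w = gR A B C z"
        by blast
      have "x \<in> V" "z \<in> V" using h(1) E by blast+
      then have "gL A B C v = gL A B C x" "gL A B C w = gL A B C z" using h eqv that by blast+
      then show "\<exists>x z. (x,z) \<in> edges A \<union> edges B \<union> edges C \<and> gL A B C v = gL A B C x \<and> gL A B C w = gL A B C z"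
        using h(1) by blast
    qed
    also have "\<dots> \<longleftrightarrow> (gR A B C v, gR A B C w) \<in> edges (lift A \<bullet> (B \<bullet> C))"
      unfolding edgesR by auto
    finally show ?thesis .
  qed
  have mods: "is_module \<Sigma> ((A \<bullet> B) \<bullet> lift C)" "is_module \<Sigma> (lift A \<bullet> (B \<bullet> C))"
    using pL.comp_module pR.comp_module by blast+
  show ?thesis unfolding module_iso_def
  proof (intro exI conjI)
    show "bij_betw f (nodes ((A \<bullet> B) \<bullet> lift C)) (nodes (lift A \<bullet> (B \<bullet> C)))"
      unfolding nodesL nodesR by (rule bij)
    show "\<forall>x\<in>nodes ((A \<bullet> B) \<bullet> lift C). \<forall>z\<in>nodes ((A \<bullet> B) \<bullet> lift C).
       (x, z) \<in> edges ((A \<bullet> B) \<bullet> lift C) \<longleftrightarrow> (f x, f z) \<in> edges (lift A \<bullet> (B \<bullet> C))"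
      unfolding nodesL using edg fg by auto
    show "\<forall>x\<in>nodes ((A \<bullet> B) \<bullet> lift C).
       lif (lift A \<bullet> (B \<bullet> C)) (f x) = lif ((A \<bullet> B) \<bullet> lift C) x \<and>
       rif (lift A \<bullet> (B \<bullet> C)) (f x) = rif ((A \<bullet> B) \<bullet> lift C) x"
      unfolding nodesL using fg lifV rifV by auto
  qed (use mods in \<open>auto simp: is_module_def\<close>)
qed

end

theorem mainTheorem1:
  fixes \<Sigma> :: "'l set" and A B C :: "('v, 'l) module"
  assumes "is_module \<Sigma> A" and "is_module \<Sigma> B" and "is_module \<Sigma> C"
    and "nodes A \<inter> nodes B = {}" and "nodes A \<inter> nodes C = {}" and "nodes B \<inter> nodes C = {}"
  shows "composable (A \<bullet> B) (lift C) \<and> composable (lift A) (B \<bullet> C) \<and>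
         is_module \<Sigma> ((A \<bullet> B) \<bullet> lift C) \<and> is_module \<Sigma> (lift A \<bullet> (B \<bullet> C)) \<and>
         module_iso ((A \<bullet> B) \<bullet> lift C) (lift A \<bullet> (B \<bullet> C))"
proof -
  interpret T: triple \<Sigma> A B C using assms by (simp add: triple_def)
  have "composable (A \<bullet> B) (lift C)" unfolding composable_def
    using disj_comp_lift[of A B C] assms by blast
  moreover have "composable (lift A) (B \<bullet> C)" unfolding composable_def
    using disj_lift_comp[of A B C] assms by blast
  ultimately show ?thesis using T.pL.comp_module T.pR.comp_module T.iso by blast
qed

end
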